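(* Let $\Omega\subseteq\mathbb{R}^n$ be open and let $\mathcal{F}\subseteq C(\Omega)$ be a set of continuous real functions on $\Omega$. Then the interval hull $\mathrm{hull}(\mathcal{F})$ is a D-continuous interval function.
   Context: $\overline{\mathbb{R}}=\mathbb{R}\cup\{\pm\infty\}$, $\mathbb{I}\overline{\mathbb{R}}$ is the set of closed intervals $[\underline a,\overline a]$ with $\underline a\le\overline a$ in $\overline{\mathbb{R}}$, $a\in\overline{\mathbb{R}}$ identified with $[a,a]$. $\mathbb{A}(X)$ is the set of functions $X\to\mathbb{I}\overline{\mathbb{R}}$, written $f=[\underline f,\overline f]$. A function $\psi=[\underline\psi,\overline\psi]\in\mathbb{A}(\Omega)$ is called continuous if $\underline\psi$ and $\overline\psi$ are continuous extended-real-valued functions. A continuous interval enclosure of $\mathcal{F}$ is a continuous $\psi\in\mathbb{A}(\Omega)$ with $\phi(x)\in\psi(x)$ for all $x\in\Omega$, $\phi\in\mathcal{F}$; with $\hat{\mathcal{F}}$ the set of all such enclosures, $\mathrm{hull}(\mathcal{F})(x)=\bigcap_{\psi\in\hat{\mathcal{F}}}\psi(x)$. $B_\delta(x)=\{y\in\Omega:\|x-y\|<\delta\}$. For dense $D\subseteq\Omega$ and $f\in\mathbb{A}(D)$: $I(D,\Omega,f)(x)=\sup_{\delta>0}\inf\{z\in f(y):y\in B_\delta(x)\cap D\}$, $S(D,\Omega,f)(x)=\inf_{\delta>0}\sup\{z\in f(y):y\in B_\delta(x)\cap D\}$, $F(D,\Omega,f)(x)=[I(D,\Omega,f)(x),S(D,\Omega,f)(x)]$.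 $f\in\mathbb{A}(\Omega)$ is D-continuous if $F(D,\Omega,f)=f$ for every dense subset $D$ of $\Omega$. *)

theory Defs
  imports "HOL-Analysis.Analysis"
begin

definition interval_fun :: "'a set \<Rightarrow> ('a \<Rightarrow> ereal set) \<Rightarrow> bool" where
  "interval_fun X f \<longleftrightarrow> (\<forall>x\<in>X. \<exists>a b. a \<le> b \<and> f x = {a..b})"

definition cont_interval_fun :: "'a::topological_space set \<Rightarrow> ('a \<Rightarrow> ereal set) \<Rightarrow> bool" where
  "cont_interval_fun \<Omega> \<psi> \<longleftrightarrow>
     (\<exists>l u. continuous_on \<Omega> l \<and> continuous_on \<Omega> u \<and>
            (\<forall>x\<in>\<Omega>. l x \<le> u x \<and> \<psi> x = {l x..u x}))"

definition enclosures :: "'a::topological_space set \<Rightarrow> ('a \<Rightarrow> real) set \<Rightarrow> ('a \<Rightarrow> ereal set) set" where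
  "enclosures \<Omega> \<F> = {\<psi>. cont_interval_fun \<Omega> \<psi> \<and> (\<forall>x\<in>\<Omega>. \<forall>\<phi>\<in>\<F>. ereal (\<phi> x) \<in> \<psi> x)}"

definition ihull :: "'a::topological_space set \<Rightarrow> ('a \<Rightarrow> real) set \<Rightarrow> 'a \<Rightarrow> ereal set" where
  "ihull \<Omega> \<F> x = (\<Inter>\<psi>\<in>enclosures \<Omega> \<F>. \<psi> x)"

definition Bd :: "'a::metric_space set \<Rightarrow> real \<Rightarrow> 'a \<Rightarrow> 'a set" where
  "Bd \<Omega> \<delta> x = {y\<in>\<Omega>. dist x y < \<delta>}"

definition Ilow :: "'a::metric_space set \<Rightarrow> 'a set \<Rightarrow> ('a \<Rightarrow> ereal set) \<Rightarrow> 'a \<Rightarrow> ereal" where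
  "Ilow D \<Omega> f x = (SUP \<delta>\<in>{0<..}. Inf {z. \<exists>y\<in>Bd \<Omega> \<delta> x \<inter> D. z \<in> f y})"

definition Supp :: "'a::metric_space set \<Rightarrow> 'a set \<Rightarrow> ('a \<Rightarrow> ereal set) \<Rightarrow> 'a \<Rightarrow> ereal" where
  "Supp D \<Omega> f x = (INF \<delta>\<in>{0<..}. Sup {z. \<exists>y\<in>Bd \<Omega> \<delta> x \<inter> D. z \<in> f y})"

definition Fop :: "'a::metric_space set \<Rightarrow> 'a set \<Rightarrow> ('a \<Rightarrow> ereal set) \<Rightarrow> 'a \<Rightarrow> ereal set" where
  "Fop D \<Omega> f x = {Ilow D \<Omega> f x .. Supp D \<Omega> f x}"

definition D_continuous :: "'a::metric_space set \<Rightarrow> ('a \<Rightarrow> ereal set) \<Rightarrow> bool" where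
  "D_continuous \<Omega> f \<longleftrightarrow>
     (\<forall>D. D \<subseteq> \<Omega> \<and> \<Omega> \<subseteq> closure D \<longrightarrow> (\<forall>x\<in>\<Omega>. Fop D \<Omega> f x = f x))"

end

theory Submission imports Defs begin

lemma bump_low:
  fixes x :: "'a::metric_space" and c \<delta> :: real
  assumes d: "\<delta> > 0"
  shows "\<exists>l::'a \<Rightarrow> ereal. continuous_on UNIV l \<and> l x = ereal c \<and> (\<forall>y. l y \<le> ereal c)
          \<and> (\<forall>y. \<delta> \<le> dist x y \<longrightarrow> l y = -\<infinity>)"
proof -
  define l where "l y = (if dist x y < \<delta> then ereal (c + ln ((\<delta> - dist x y) / \<delta>)) else -\<infinity>)" for y
  have "isCont l y0" for y0
  proof (cases "dist x y0 < \<delta>")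
    case True
    let ?S = "{y. dist x y < \<delta>}"
    have op: "open ?S" using open_ball[of x \<delta>] by (simp add: ball_def)
    have "((\<lambda>y. c + ln ((\<delta> - dist x y) / \<delta>)) \<longlongrightarrow> c + ln ((\<delta> - dist x y0) / \<delta>)) (at y0)"
      by (intro tendsto_intros) (use True d in auto)
    then have ic: "isCont (\<lambda>y. ereal (c + ln ((\<delta> - dist x y) / \<delta>))) y0"
      unfolding isCont_def by (rule tendsto_ereal)
    have ly0: "l y0 = ereal (c + ln ((\<delta> - dist x y0) / \<delta>))" using True by (simp add: l_def)
    have ev: "eventually (\<lambda>y. l y = ereal (c + ln ((\<delta> - dist x y) / \<delta>))) (at y0)"
    proof -
      have "eventually (\<lambda>y. y \<in> ?S) (at y0)"
        using op True by (intro eventually_at_in_open') auto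
      then show ?thesis by (rule eventually_mono) (simp add: l_def)
    qed
    show ?thesis unfolding isCont_def ly0
      using ic unfolding isCont_def by (subst tendsto_cong[OF ev])
  next
    case False
    then have l0: "l y0 = -\<infinity>" by (simp add: l_def)
    show ?thesis unfolding isCont_def l0
    proof (rule order_tendstoI)
      fix a :: ereal assume "a < -\<infinity>" then show "eventually (\<lambda>y. a < l y) (at y0)" by simp
    next
      fix a :: ereal assume "-\<infinity> < a"
      then obtain b :: real where b: "ereal b < a"
        using ereal_dense2 by blast
      define \<eta> where "\<eta> = \<delta> * exp (b - c)"
      have \<eta>: "\<eta> > 0" using d by (simp add: \<eta>_def)
      have "eventually (\<lambda>y. dist y y0 < \<eta>) (at y0)"
        unfolding eventually_at using \<eta> by blast
      then show "eventually (\<lambda>y. l y < a) (at y0)"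
      proof (rule eventually_mono)
        fix y assume y: "dist y y0 < \<eta>"
        show "l y < a"
        proof (cases "dist x y < \<delta>")
          case True
          have "dist x y0 \<le> dist x y + dist y y0" by (rule dist_triangle)
          then have "\<delta> - dist x y < \<eta>" using False y by linarith
          then have "(\<delta> - dist x y)/\<delta> < exp (b - c)" using d by (simp add: \<eta>_def field_simps)
          moreover have "(\<delta> - dist x y)/\<delta> > 0" using True d by simp
          ultimately have "ln ((\<delta> - dist x y)/\<delta>) < ln (exp (b - c))"
            by (subst ln_less_cancel_iff) auto
          then have "ln ((\<delta> - dist x y)/\<delta>) < b - c" by simp
          then have "l y < ereal b" using True by (simp add: l_def)
          then show ?thesis using b by simp
        next
          case False then show ?thesis using b \<open>-\<infinity> < a\<close> by (simp add: l_def)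
        qed
      qed
    qed
  qed
  then have "continuous_on UNIV l" by (simp add: continuous_at_imp_continuous_on)
  moreover have "l x = ereal c" using d by (simp add: l_def)
  moreover have "l y \<le> ereal c" for y
  proof (cases "dist x y < \<delta>")
    case True
    have "(\<delta> - dist x y) / \<delta> \<le> 1" using d by (simp add: field_simps)
    moreover have "(\<delta> - dist x y) / \<delta> > 0" using d True by simp
    ultimately have "ln ((\<delta> - dist x y) / \<delta>) \<le> 0" by simp
    then show ?thesis using True by (simp add: l_def)
  qed (simp add: l_def)
  moreover have "\<forall>y. \<delta> \<le> dist x y \<longrightarrow> l y = -\<infinity>" by (simp add: l_def)
  ultimately show ?thesis by blast
qed


definition Lh :: "'a::topological_space set \<Rightarrow> ('a \<Rightarrow> real) set \<Rightarrow> 'a \<Rightarrow> ereal" where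
  "Lh \<Omega> F x = Sup {l x | l. continuous_on \<Omega> l \<and> (\<forall>y\<in>\<Omega>. \<forall>\<phi>\<in>F. l y \<le> ereal (\<phi> y))}"

definition Uh :: "'a::topological_space set \<Rightarrow> ('a \<Rightarrow> real) set \<Rightarrow> 'a \<Rightarrow> ereal" where
  "Uh \<Omega> F x = Inf {u x | u. continuous_on \<Omega> u \<and> (\<forall>y\<in>\<Omega>. \<forall>\<phi>\<in>F. ereal (\<phi> y) \<le> u y)}"

lemma Lh_upper:
  "continuous_on \<Omega> l \<Longrightarrow> (\<forall>y\<in>\<Omega>. \<forall>\<phi>\<in>F. l y \<le> ereal (\<phi> y)) \<Longrightarrow> l x \<le> Lh \<Omega> F x"
  unfolding Lh_def by (rule Sup_upper) blast

lemma Uh_lower: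
  "continuous_on \<Omega> u \<Longrightarrow> (\<forall>y\<in>\<Omega>. \<forall>\<phi>\<in>F. ereal (\<phi> y) \<le> u y) \<Longrightarrow> Uh \<Omega> F x \<le> u x"
  unfolding Uh_def by (rule Inf_lower) blast

lemma Lh_le_phi: "\<phi> \<in> F \<Longrightarrow> x \<in> \<Omega> \<Longrightarrow> Lh \<Omega> F x \<le> ereal (\<phi> x)"
  unfolding Lh_def by (rule Sup_least) blast

lemma phi_le_Uh: "\<phi> \<in> F \<Longrightarrow> x \<in> \<Omega> \<Longrightarrow> ereal (\<phi> x) \<le> Uh \<Omega> F x"
  unfolding Uh_def by (rule Inf_greatest) blast

lemma Lh_le_Uh: "F \<noteq> {} \<Longrightarrow> x \<in> \<Omega> \<Longrightarrow> Lh \<Omega> F x \<le> Uh \<Omega> F x"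
proof -
  assume "F \<noteq> {}" "x \<in> \<Omega>"
  then obtain \<phi> where "\<phi> \<in> F" by blast
  then show ?thesis using Lh_le_phi[OF _ \<open>x \<in> \<Omega>\<close>] phi_le_Uh[OF _ \<open>x \<in> \<Omega>\<close>] by (meson order_trans)
qed

lemma hull_eq:
  assumes "F \<noteq> {}" "x \<in> \<Omega>"
  shows "ihull \<Omega> F x = {Lh \<Omega> F x .. Uh \<Omega> F x}"
proof (intro set_eqI iffI)
  fix z assume z: "z \<in> ihull \<Omega> F x"
  have "Lh \<Omega> F x \<le> z" unfolding Lh_def
  proof (rule Sup_least)
    fix v assume "v \<in> {l x | l. continuous_on \<Omega> l \<and> (\<forall>y\<in>\<Omega>. \<forall>\<phi>\<in>F. l y \<le> ereal (\<phi> y))}"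
    then obtain l where v: "v = l x" and cl: "continuous_on \<Omega> l" and le: "\<forall>y\<in>\<Omega>. \<forall>\<phi>\<in>F. l y \<le> ereal (\<phi> y)"
      by blast
    have "cont_interval_fun \<Omega> (\<lambda>y. {l y..\<infinity>})" unfolding cont_interval_fun_def
      by (rule exI[where x=l], rule exI[where x="\<lambda>_. \<infinity>"]) (simp add: cl)
    then have "(\<lambda>y. {l y..\<infinity>}) \<in> enclosures \<Omega> F"
      unfolding enclosures_def using le by auto
    then have "z \<in> {l x..\<infinity>}" using z unfolding ihull_def by blast
    then show "v \<le> z" using v by simp
  qed
  moreover have "z \<le> Uh \<Omega> F x" unfolding Uh_def
  proof (rule Inf_greatest)
    fix v assume "v \<in> {u x | u. continuous_on \<Omega> u \<and> (\<forall>y\<in>\<Omega>. \<forall>\<phi>\<in>F. ereal (\<phi> y) \<le> u y)}"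
    then obtain u where v: "v = u x" and cu: "continuous_on \<Omega> u" and le: "\<forall>y\<in>\<Omega>. \<forall>\<phi>\<in>F. ereal (\<phi> y) \<le> u y"
      by blast
    have "cont_interval_fun \<Omega> (\<lambda>y. {-\<infinity>..u y})" unfolding cont_interval_fun_def
      by (rule exI[where x="\<lambda>_. -\<infinity>"], rule exI[where x=u]) (simp add: cu)
    then have "(\<lambda>y. {-\<infinity>..u y}) \<in> enclosures \<Omega> F"
      unfolding enclosures_def using le by auto
    then have "z \<in> {-\<infinity>..u x}" using z unfolding ihull_def by blast
    then show "z \<le> v" using v by simp
  qed
  ultimately show "z \<in> {Lh \<Omega> F x .. Uh \<Omega> F x}" by simp
next
  fix z assume z: "z \<in> {Lh \<Omega> F x .. Uh \<Omega> F x}"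
  show "z \<in> ihull \<Omega> F x" unfolding ihull_def
  proof (rule INT_I)
    fix \<psi> assume "\<psi> \<in> enclosures \<Omega> F"
    then obtain l u where cl: "continuous_on \<Omega> l" and cu: "continuous_on \<Omega> u"
      and eq: "\<forall>y\<in>\<Omega>. l y \<le> u y \<and> \<psi> y = {l y..u y}" and enc: "\<forall>y\<in>\<Omega>. \<forall>\<phi>\<in>F. ereal (\<phi> y) \<in> \<psi> y"
      unfolding enclosures_def cont_interval_fun_def by blast
    have "\<forall>y\<in>\<Omega>. \<forall>\<phi>\<in>F. l y \<le> ereal (\<phi> y)" using eq enc by auto
    from Lh_upper[OF cl this] have a1: "l x \<le> Lh \<Omega> F x" .
    have "\<forall>y\<in>\<Omega>. \<forall>\<phi>\<in>F. ereal (\<phi> y) \<le> u y" using eq enc by auto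
    from Uh_lower[OF cu this] have a2: "Uh \<Omega> F x \<le> u x" .
    have "\<psi> x = {l x..u x}" using eq assms(2) by blast
    then show "z \<in> \<psi> x" using z a1 a2 by auto
  qed
qed


lemma Ilow_eq:
  fixes \<Omega> :: "'a::metric_space set"
  assumes op: "open \<Omega>" and cont: "\<And>\<phi>. \<phi> \<in> F \<Longrightarrow> continuous_on \<Omega> \<phi>" and ne: "F \<noteq> {}"
    and D: "D \<subseteq> \<Omega>" "\<Omega> \<subseteq> closure D" and x: "x \<in> \<Omega>"
  shows "Ilow D \<Omega> (ihull \<Omega> F) x = Lh \<Omega> F x"
proof -
  define A where "A \<delta> = {z. \<exists>y\<in>Bd \<Omega> \<delta> x \<inter> D. z \<in> ihull \<Omega> F y}" for \<delta>
  have Ilow: "Ilow D \<Omega> (ihull \<Omega> F) x = (SUP \<delta>\<in>{0<..}. Inf (A \<delta>))"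
    unfolding Ilow_def A_def by simp
  have memA: "z \<in> A \<delta> \<longleftrightarrow> (\<exists>y\<in>Bd \<Omega> \<delta> x \<inter> D. Lh \<Omega> F y \<le> z \<and> z \<le> Uh \<Omega> F y)" for z \<delta>
    unfolding A_def Bd_def using hull_eq[OF ne] by auto
  show ?thesis unfolding Ilow
  proof (rule antisym)
    show "(SUP \<delta>\<in>{0<..}. Inf (A \<delta>)) \<le> Lh \<Omega> F x"
    proof (rule SUP_least)
      fix \<delta> :: real assume "\<delta> \<in> {0<..}"
      then have d: "\<delta> > 0" by simp
      show "Inf (A \<delta>) \<le> Lh \<Omega> F x"
      proof (rule ccontr)
        assume "\<not> Inf (A \<delta>) \<le> Lh \<Omega> F x"
        then have "Lh \<Omega> F x < Inf (A \<delta>)" by simp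
        then obtain c :: real where c1: "Lh \<Omega> F x < ereal c" and c2: "ereal c < Inf (A \<delta>)"
          using ereal_dense2 by blast
        have big: "ereal c \<le> ereal (\<phi> y)" if y: "y \<in> \<Omega>" "dist x y < \<delta>" and ph: "\<phi> \<in> F" for y \<phi>
        proof (rule ccontr)
          assume "\<not> ereal c \<le> ereal (\<phi> y)"
          then have lt: "\<phi> y < c" by simp
          have "(\<phi> \<longlongrightarrow> \<phi> y) (at y within \<Omega>)"
            using cont[OF ph] y(1) unfolding continuous_on_def by blast
          from order_tendstoD(2)[OF this lt]
          obtain r where r: "r > 0" and rr: "\<forall>y'\<in>\<Omega>. y' \<noteq> y \<and> dist y' y < r \<longrightarrow> \<phi> y' < c"
            unfolding eventually_at by blast
          obtain e where e: "e > 0" and eb: "ball y e \<subseteq> \<Omega>"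
            using op y(1) open_contains_ball by blast
          define \<rho> where "\<rho> = min r (min e (\<delta> - dist x y))"
          have \<rho>: "\<rho> > 0" using r e y(2) by (simp add: \<rho>_def)
          obtain y' where y'D: "y' \<in> D" and dy': "dist y' y < \<rho>"
            using D(2) y(1) \<rho> closure_approachable by blast
          have y'O: "y' \<in> \<Omega>" using eb dy' by (auto simp: \<rho>_def dist_commute)
          have "dist x y' \<le> dist x y + dist y' y" by (simp add: dist_triangle2)
          then have y'd: "dist x y' < \<delta>" using dy' by (simp add: \<rho>_def)
          have "\<phi> y' < c" using rr y'O dy' lt by (cases "y' = y") (auto simp: \<rho>_def)
          then have "ereal (\<phi> y') < ereal c" by simp
          then have Ly': "Lh \<Omega> F y' < ereal c"
            using Lh_le_phi[OF ph y'O] by (rule le_less_trans[rotated])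
          have "Lh \<Omega> F y' \<in> A \<delta>" unfolding memA Bd_def
            using y'D y'O y'd Lh_le_Uh[OF ne y'O] by auto
          then have "Inf (A \<delta>) \<le> Lh \<Omega> F y'" by (rule Inf_lower)
          then show False using Ly' c2 by simp
        qed
        obtain l :: "'a \<Rightarrow> ereal" where cl: "continuous_on UNIV l" and lx: "l x = ereal c"
          and lc: "\<forall>y. l y \<le> ereal c" and lo: "\<forall>y. \<delta> \<le> dist x y \<longrightarrow> l y = -\<infinity>"
          using bump_low[OF d, of x c] by blast
        have "\<forall>y\<in>\<Omega>. \<forall>\<phi>\<in>F. l y \<le> ereal (\<phi> y)"
        proof (intro ballI)
          fix y \<phi> assume "y \<in> \<Omega>" "\<phi> \<in> F"
          show "l y \<le> ereal (\<phi> y)"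
          proof (cases "dist x y < \<delta>")
            case True
            then show ?thesis using big[OF \<open>y \<in> \<Omega>\<close> True \<open>\<phi> \<in> F\<close>] lc order_trans by blast
          next
            case False then show ?thesis using lo by simp
          qed
        qed
        from Lh_upper[OF continuous_on_subset[OF cl subset_UNIV] this, of x]
        have "ereal c \<le> Lh \<Omega> F x" using lx by simp
        then show False using c1 by simp
      qed
    qed
  next
    show "Lh \<Omega> F x \<le> (SUP \<delta>\<in>{0<..}. Inf (A \<delta>))"
    proof (rule dense_le)
      fix c assume "c < Lh \<Omega> F x"
      then obtain v where "v \<in> {l x | l. continuous_on \<Omega> l \<and> (\<forall>y\<in>\<Omega>. \<forall>\<phi>\<in>F. l y \<le> ereal (\<phi> y))}"
        and cv: "c < v" unfolding Lh_def less_Sup_iff by blast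
      then obtain l where v: "v = l x" and cl: "continuous_on \<Omega> l" and le: "\<forall>y\<in>\<Omega>. \<forall>\<phi>\<in>F. l y \<le> ereal (\<phi> y)"
        by blast
      have "(l \<longlongrightarrow> l x) (at x within \<Omega>)" using cl x unfolding continuous_on_def by blast
      from order_tendstoD(1)[OF this] cv v
      obtain d where d: "d > 0" and dd: "\<forall>y\<in>\<Omega>. y \<noteq> x \<and> dist y x < d \<longrightarrow> c < l y"
        unfolding eventually_at by blast
      have "c \<le> Inf (A d)"
      proof (rule Inf_greatest)
        fix z assume "z \<in> A d"
        then obtain y where y: "y \<in> \<Omega>" "dist x y < d" and z: "Lh \<Omega> F y \<le> z"
          unfolding memA Bd_def by auto
        have "c < l y" using dd y cv v by (cases "y = x") (auto simp: dist_commute)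
        also have "l y \<le> Lh \<Omega> F y" by (rule Lh_upper[OF cl le])
        finally show "c \<le> z" using z by simp
      qed
      also have "Inf (A d) \<le> (SUP \<delta>\<in>{0<..}. Inf (A \<delta>))" using d by (intro SUP_upper) simp
      finally show "c \<le> (SUP \<delta>\<in>{0<..}. Inf (A \<delta>))" .
    qed
  qed
qed


lemma Supp_eq:
  fixes \<Omega> :: "'a::metric_space set"
  assumes op: "open \<Omega>" and cont: "\<And>\<phi>. \<phi> \<in> F \<Longrightarrow> continuous_on \<Omega> \<phi>" and ne: "F \<noteq> {}"
    and D: "D \<subseteq> \<Omega>" "\<Omega> \<subseteq> closure D" and x: "x \<in> \<Omega>"
  shows "Supp D \<Omega> (ihull \<Omega> F) x = Uh \<Omega> F x"
proof -
  define B where "B \<delta> = {z. \<exists>y\<in>Bd \<Omega> \<delta> x \<inter> D. z \<in> ihull \<Omega> F y}" for \<delta>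
  have Supp: "Supp D \<Omega> (ihull \<Omega> F) x = (INF \<delta>\<in>{0<..}. Sup (B \<delta>))"
    unfolding Supp_def B_def by simp
  have memB: "z \<in> B \<delta> \<longleftrightarrow> (\<exists>y\<in>Bd \<Omega> \<delta> x \<inter> D. Lh \<Omega> F y \<le> z \<and> z \<le> Uh \<Omega> F y)" for z \<delta>
    unfolding B_def Bd_def using hull_eq[OF ne] by auto
  show ?thesis unfolding Supp
  proof (rule antisym)
    show "Uh \<Omega> F x \<le> (INF \<delta>\<in>{0<..}. Sup (B \<delta>))"
    proof (rule INF_greatest)
      fix \<delta> :: real assume "\<delta> \<in> {0<..}"
      then have d: "\<delta> > 0" by simp
      show "Uh \<Omega> F x \<le> Sup (B \<delta>)"
      proof (rule ccontr)
        assume "\<not> Uh \<Omega> F x \<le> Sup (B \<delta>)"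
        then have "Sup (B \<delta>) < Uh \<Omega> F x" by simp
        then obtain c :: real where c1: "Sup (B \<delta>) < ereal c" and c2: "ereal c < Uh \<Omega> F x"
          using ereal_dense2 by blast
        have small: "ereal (\<phi> y) \<le> ereal c" if y: "y \<in> \<Omega>" "dist x y < \<delta>" and ph: "\<phi> \<in> F" for y \<phi>
        proof (rule ccontr)
          assume "\<not> ereal (\<phi> y) \<le> ereal c"
          then have lt: "c < \<phi> y" by simp
          have "(\<phi> \<longlongrightarrow> \<phi> y) (at y within \<Omega>)"
            using cont[OF ph] y(1) unfolding continuous_on_def by blast
          from order_tendstoD(1)[OF this lt]
          obtain r where r: "r > 0" and rr: "\<forall>y'\<in>\<Omega>. y' \<noteq> y \<and> dist y' y < r \<longrightarrow> c < \<phi> y'"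
            unfolding eventually_at by blast
          obtain e where e: "e > 0" and eb: "ball y e \<subseteq> \<Omega>"
            using op y(1) open_contains_ball by blast
          define \<rho> where "\<rho> = min r (min e (\<delta> - dist x y))"
          have \<rho>: "\<rho> > 0" using r e y(2) by (simp add: \<rho>_def)
          obtain y' where y'D: "y' \<in> D" and dy': "dist y' y < \<rho>"
            using D(2) y(1) \<rho> closure_approachable by blast
          have y'O: "y' \<in> \<Omega>" using eb dy' by (auto simp: \<rho>_def dist_commute)
          have "dist x y' \<le> dist x y + dist y' y" by (simp add: dist_triangle2)
          then have y'd: "dist x y' < \<delta>" using dy' by (simp add: \<rho>_def)
          have "c < \<phi> y'" using rr y'O dy' lt by (cases "y' = y") (auto simp: \<rho>_def)
          then have "ereal c < ereal (\<phi> y')" by simp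
          then have Uy': "ereal c < Uh \<Omega> F y'"
            using phi_le_Uh[OF ph y'O] by (rule less_le_trans)
          have "Uh \<Omega> F y' \<in> B \<delta>" unfolding memB Bd_def
            using y'D y'O y'd Lh_le_Uh[OF ne y'O] by auto
          then have "Uh \<Omega> F y' \<le> Sup (B \<delta>)" by (rule Sup_upper)
          then show False using Uy' c1 by simp
        qed
        obtain l :: "'a \<Rightarrow> ereal" where cl: "continuous_on UNIV l" and lx: "l x = ereal (-c)"
          and lc: "\<forall>y. l y \<le> ereal (-c)" and lo: "\<forall>y. \<delta> \<le> dist x y \<longrightarrow> l y = -\<infinity>"
          using bump_low[OF d, of x "-c"] by blast
        have cu: "continuous_on UNIV (\<lambda>y. - l y)"
          using continuous_on_compose[OF cl continuous_uminus_ereal] by (simp add: o_def)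
        have "\<forall>y\<in>\<Omega>. \<forall>\<phi>\<in>F. ereal (\<phi> y) \<le> - l y"
        proof (intro ballI)
          fix y \<phi> assume "y \<in> \<Omega>" "\<phi> \<in> F"
          show "ereal (\<phi> y) \<le> - l y"
          proof (cases "dist x y < \<delta>")
            case True
            have "- ereal (-c) \<le> - l y" using lc ereal_minus_le_minus by blast
            then have "ereal c \<le> - l y" by simp
            then show ?thesis using small[OF \<open>y \<in> \<Omega>\<close> True \<open>\<phi> \<in> F\<close>] order_trans by blast
          next
            case False then show ?thesis using lo by simp
          qed
        qed
        from Uh_lower[OF continuous_on_subset[OF cu subset_UNIV] this, of x]
        have "Uh \<Omega> F x \<le> ereal c" using lx by simp
        then show False using c2 by simp
      qed
    qed
  next
    show "(INF \<delta>\<in>{0<..}. Sup (B \<delta>)) \<le> Uh \<Omega> F x"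
    proof (rule dense_ge)
      fix c assume "Uh \<Omega> F x < c"
      then obtain v where "v \<in> {u x | u. continuous_on \<Omega> u \<and> (\<forall>y\<in>\<Omega>. \<forall>\<phi>\<in>F. ereal (\<phi> y) \<le> u y)}"
        and cv: "v < c" unfolding Uh_def Inf_less_iff by blast
      then obtain u where v: "v = u x" and cu: "continuous_on \<Omega> u" and le: "\<forall>y\<in>\<Omega>. \<forall>\<phi>\<in>F. ereal (\<phi> y) \<le> u y"
        by blast
      have "(u \<longlongrightarrow> u x) (at x within \<Omega>)" using cu x unfolding continuous_on_def by blast
      from order_tendstoD(2)[OF this] cv v
      obtain d where d: "d > 0" and dd: "\<forall>y\<in>\<Omega>. y \<noteq> x \<and> dist y x < d \<longrightarrow> u y < c"
        unfolding eventually_at by blast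
      have "(INF \<delta>\<in>{0<..}. Sup (B \<delta>)) \<le> Sup (B d)" using d by (intro INF_lower) simp
      also have "Sup (B d) \<le> c"
      proof (rule Sup_least)
        fix z assume "z \<in> B d"
        then obtain y where y: "y \<in> \<Omega>" "dist x y < d" and z: "z \<le> Uh \<Omega> F y"
          unfolding memB Bd_def by auto
        have "z \<le> Uh \<Omega> F y" by (rule z)
        also have "Uh \<Omega> F y \<le> u y" by (rule Uh_lower[OF cu le])
        also have "u y < c" using dd y cv v by (cases "y = x") (auto simp: dist_commute)
        finally show "z \<le> c" by simp
      qed
      finally show "(INF \<delta>\<in>{0<..}. Sup (B \<delta>)) \<le> c" .
    qed
  qed
qed

theorem theorem20:
  fixes \<Omega> :: "(real^'n) set" and \<F> :: "((real^'n) \<Rightarrow> real) set"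
  assumes "open \<Omega>"
    and "\<And>\<phi>. \<phi> \<in> \<F> \<Longrightarrow> continuous_on \<Omega> \<phi>"
    and "\<F> \<noteq> {}"
  shows "interval_fun \<Omega> (ihull \<Omega> \<F>) \<and> D_continuous \<Omega> (ihull \<Omega> \<F>)"
proof
  show "interval_fun \<Omega> (ihull \<Omega> \<F>)"
    unfolding interval_fun_def using hull_eq[OF assms(3)] Lh_le_Uh[OF assms(3)] by blast
  show "D_continuous \<Omega> (ihull \<Omega> \<F>)"
    unfolding D_continuous_def
  proof (intro allI impI ballI)
    fix D x assume D: "D \<subseteq> \<Omega> \<and> \<Omega> \<subseteq> closure D" and x: "x \<in> \<Omega>"
    show "Fop D \<Omega> (ihull \<Omega> \<F>) x = ihull \<Omega> \<F> x"
      unfolding Fop_def hull_eq[OF assms(3) x]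
      using Ilow_eq[OF assms D[THEN conjunct1] D[THEN conjunct2] x]
        Supp_eq[OF assms D[THEN conjunct1] D[THEN conjunct2] x] by simp
  qed
qed

end
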